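(* Let $ABCD$ be a quadrilateral (a simple polygon with consecutive vertices $A,B,C,D$) such that the diagonal $AC$ lies in it and divides it into the two triangles $ABC$ and $ACD$, and these two triangles have equal area. Let $O$ be the midpoint of $AC$. Let $f\colon ABCD\to\mathbb{R}$ be a function whose restrictions to the triangles $ABC$ and $ACD$ are convex. Then $$\operatorname{Avg}(f,ABCD)\le\frac13\left(\frac{f(B)+f(D)}{2}+2\operatorname{Avg}(f,AC)\right)\le\frac13\left(\frac{f(B)+f(D)}{2}+f(A)+f(C)\right),$$ and $$\operatorname{Avg}(f,ABCD)\le\frac{f(O)}{3}+\frac23\cdot\frac{\operatorname{Avg}(f,AB)+\operatorname{Avg}(f,BC)+\operatorname{Avg}(f,CD)+\operatorname{Avg}(f,DA)}{4}\le\frac{f(O)}{3}+\frac23\cdot\frac{f(A)+f(B)+f(C)+f(D)}{4}.$$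
   Context: For a set $U$ which is a $k$-dimensional object (segment, polygon, etc.) and an integrable $f$, $\operatorname{Avg}(f,U)=\frac{1}{\operatorname{Vol}_k(U)}\int_U f$, where $\operatorname{Vol}_k$ is $k$-dimensional measure (length, area). For points $X,Y,\dots$ we write $\operatorname{Avg}(f,XY\dots)$ for $\operatorname{Avg}(f,\operatorname{conv}\{X,Y,\dots\})$; e.g. $\operatorname{Avg}(f,AC)$ is the average of $f$ over the segment $AC$ with respect to length, and $\operatorname{Avg}(f,ABCD)$ is the average over the quadrilateral with respect to area. *)

theory Defs
  imports "HOL-Analysis.Analysis"
begin

text \<open>Signed (doubled) area / orientation of the triangle P Q R in the plane.\<close>
definition orient :: "real^2 \<Rightarrow> real^2 \<Rightarrow> real^2 \<Rightarrow> real" where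
  "orient P Q R = (Q$1 - P$1) * (R$2 - P$2) - (Q$2 - P$2) * (R$1 - P$1)"

definition avg_area :: "(real^2 \<Rightarrow> real) \<Rightarrow> (real^2) set \<Rightarrow> real" where
  "avg_area f U = integral U f / measure lebesgue U"

text \<open>Average of f over the segment XY with respect to length
  (via the affine, constant-speed parametrisation of the segment).\<close>
definition avg_seg :: "(real^2 \<Rightarrow> real) \<Rightarrow> real^2 \<Rightarrow> real^2 \<Rightarrow> real" where
  "avg_seg f X Y = integral {0..1::real} (\<lambda>t. f ((1 - t) *\<^sub>R X + t *\<^sub>R Y))"

end

theory Submission
  imports Defs
begin

lemma vec2_eq: "(x::real^2) = y \<longleftrightarrow> x$1 = y$1 \<and> x$2 = y$2"
  by (simp add: vec_eq_iff forall_2)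

lemma inner2: "(x::real^2) \<bullet> y = x$1 * y$1 + x$2 * y$2"
  by (simp add: inner_vec_def sum_2)

lemma orient_hull:
  assumes "z \<in> convex hull {P, Q, R}"
  shows "\<exists>w. 0 \<le> w \<and> w \<le> 1 \<and> orient P Q z = w * orient P Q R"
proof -
  obtain u v w where uvw: "0 \<le> u" "0 \<le> v" "0 \<le> w" "u + v + w = 1"
    and z: "z = u *\<^sub>R P + v *\<^sub>R Q + w *\<^sub>R R"
    using assms unfolding convex_hull_3 by blast
  have "orient P Q z = w * orient P Q R"
  proof -
    have u: "u = 1 - v - w" using uvw(4) by simp
    show ?thesis unfolding z orient_def u by (simp add: algebra_simps)
  qed
  then show ?thesis using uvw by auto
qed

lemma line_negl:
  assumes "P \<noteq> Q"
  shows "negligible {z. orient P Q z = 0}"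
proof -
  define a :: "real^2" where "a = vector [-(Q$2 - P$2), Q$1 - P$1]"
  have "a \<noteq> 0" using assms by (auto simp: a_def vec2_eq)
  have "{z. orient P Q z = 0} = {z. a \<bullet> z = a \<bullet> P}"
    by (auto simp: a_def inner2 orient_def algebra_simps)
  then show ?thesis using negligible_hyperplane \<open>a \<noteq> 0\<close> by metis
qed


lemma absint_bdd_cont:
  fixes h :: "'a::euclidean_space \<Rightarrow> real"
  assumes "S \<in> lmeasurable" "continuous_on S h" "\<And>x. x\<in>S \<Longrightarrow> \<bar>h x\<bar> \<le> M"
  shows "h absolutely_integrable_on S"
  apply (rule measurable_bounded_by_integrable_imp_absolutely_integrable[where g="\<lambda>_. M"])
  using assms continuous_imp_measurable_on_sets_lebesgue integrable_on_const by auto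

lemma hull_bound:
  fixes f :: "real^2 \<Rightarrow> real"
  assumes cf: "convex_on (convex hull {P, X, Y}) f"
  shows "\<exists>M. \<forall>z\<in>convex hull {P, X, Y}. \<bar>f z\<bar> \<le> M"
proof -
  define M0 where "M0 = max (f P) (max (f X) (f Y))"
  have up: "\<forall>z\<in>convex hull {P, X, Y}. f z \<le> M0"
    by (rule convex_on_convex_hull_bound[OF cf]) (auto simp: M0_def)
  define c where "c = (1/3) *\<^sub>R P + (1/3) *\<^sub>R X + (1/3) *\<^sub>R Y"
  have lo: "f z \<ge> 3 * f c - 2 * M0" if z: "z \<in> convex hull {P, X, Y}" for z
  proof -
    obtain u v w where uvw: "0 \<le> u" "0 \<le> v" "0 \<le> w" "u + v + w = 1"
      and zz: "z = u *\<^sub>R P + v *\<^sub>R X + w *\<^sub>R Y"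
      using z unfolding convex_hull_3 by blast
    define y where "y = ((1-u)/2) *\<^sub>R P + ((1-v)/2) *\<^sub>R X + ((1-w)/2) *\<^sub>R Y"
    have y: "y \<in> convex hull {P, X, Y}"
    proof -
      have "\<exists>a b d. y = a *\<^sub>R P + b *\<^sub>R X + d *\<^sub>R Y \<and> 0 \<le> a \<and> 0 \<le> b \<and> 0 \<le> d \<and> a + b + d = 1"
        by (rule exI[of _ "(1-u)/2"], rule exI[of _ "(1-v)/2"], rule exI[of _ "(1-w)/2"])
           (use uvw in \<open>auto simp: y_def field_simps\<close>)
      then show ?thesis unfolding convex_hull_3 by blast
    qed
    have ceq: "c = (1 - 2/3) *\<^sub>R z + (2/3) *\<^sub>R y"
      unfolding c_def y_def zz by (simp add: vec2_eq field_simps)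
    have "f c \<le> (1 - 2/3) * f z + (2/3) * f y"
      unfolding ceq by (rule convex_onD[OF cf]) (use z y in auto)
    moreover have "f y \<le> M0" using up y by auto
    ultimately show ?thesis by (simp add: field_simps)
  qed
  show ?thesis
    by (rule exI[of _ "\<bar>M0\<bar> + \<bar>3 * f c - 2 * M0\<bar>"]) (use up lo in force)
qed

lemma seg_facts:
  fixes f :: "real^2 \<Rightarrow> real"
  assumes cf: "convex_on K f" and XK: "X \<in> K" and YK: "Y \<in> K"
    and bnd: "\<And>z. z \<in> K \<Longrightarrow> \<bar>f z\<bar> \<le> M"
  shows "continuous_on {0<..<1} (\<lambda>t. f ((1 - t) *\<^sub>R X + t *\<^sub>R Y))"
    and "(\<lambda>t. f ((1 - t) *\<^sub>R X + t *\<^sub>R Y)) absolutely_integrable_on {0..1}"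
    and "integral {0..1} (\<lambda>t. f ((1 - t) *\<^sub>R X + t *\<^sub>R Y)) \<le> (f X + f Y) / 2"
    and "\<And>t. t \<in> {0..1} \<Longrightarrow> \<bar>f ((1 - t) *\<^sub>R X + t *\<^sub>R Y)\<bar> \<le> M"
proof -
  define \<phi> where "\<phi> = (\<lambda>t. f ((1 - t) *\<^sub>R X + t *\<^sub>R Y))"
  have cK: "convex K" using cf convex_on_def by blast
  have inK: "(1 - t) *\<^sub>R X + t *\<^sub>R Y \<in> K" if "t \<in> {0..1}" for t
    using convexD[OF cK XK YK, of "1-t" t] that by auto
  show bd: "\<bar>f ((1 - t) *\<^sub>R X + t *\<^sub>R Y)\<bar> \<le> M" if "t \<in> {0..1}" for t
    using bnd inK that by blast
  have cphi: "convex_on {0..1} \<phi>"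
    unfolding convex_on_def
  proof (intro conjI ballI allI impI)
    show "convex {0..1::real}" by simp
    fix a b u v :: real assume ab: "a \<in> {0..1}" "b \<in> {0..1}" and uv: "0 \<le> u" "0 \<le> v" "u + v = 1"
    have eq: "(1 - (u *\<^sub>R a + v *\<^sub>R b)) *\<^sub>R X + (u *\<^sub>R a + v *\<^sub>R b) *\<^sub>R Y
       = u *\<^sub>R ((1 - a) *\<^sub>R X + a *\<^sub>R Y) + v *\<^sub>R ((1 - b) *\<^sub>R X + b *\<^sub>R Y)"
    proof -
      have u: "u = 1 - v" using uv by simp
      show ?thesis unfolding u by (simp add: vec2_eq algebra_simps)
    qed
    show "\<phi> (u *\<^sub>R a + v *\<^sub>R b) \<le> u * \<phi> a + v * \<phi> b"
      unfolding \<phi>_def eq using cf inK[OF ab(1)] inK[OF ab(2)] uv unfolding convex_on_def by blast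
  qed
  show cont: "continuous_on {0<..<1} (\<lambda>t. f ((1 - t) *\<^sub>R X + t *\<^sub>R Y))"
    unfolding \<phi>_def[symmetric]
    by (rule convex_on_continuous) (auto intro: convex_on_subset[OF cphi])
  have "\<phi> absolutely_integrable_on {0<..<1}"
    by (rule absint_bdd_cont[where M=M]) (use cont bd in \<open>auto simp: \<phi>_def\<close>)
  then show ai: "(\<lambda>t. f ((1 - t) *\<^sub>R X + t *\<^sub>R Y)) absolutely_integrable_on {0..1}"
    unfolding \<phi>_def[symmetric] using absolutely_integrable_on_open_interval[where f=\<phi> and a="0::real" and b=1] by simp
  have lin: "((\<lambda>t. (1 - t) * f X + t * f Y) has_integral (f X + f Y) / 2) {0..1}"
  proof -
    have "((\<lambda>t. (1 - t) * f X + t * f Y) has_integral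
          ((\<lambda>t. t * f X - t*t/2 * f X + t*t/2 * f Y) 1 - (\<lambda>t. t * f X - t*t/2 * f X + t*t/2 * f Y) 0)) {0..1}"
      by (rule fundamental_theorem_of_calculus)
         (auto intro!: derivative_eq_intros simp: algebra_simps)
    then show ?thesis by (simp add: field_simps)
  qed
  have "integral {0..1} \<phi> \<le> integral {0..1} (\<lambda>t. (1 - t) * f X + t * f Y)"
  proof (rule integral_le)
    show "\<phi> integrable_on {0..1}" using ai by (simp add: \<phi>_def absolutely_integrable_on_def)
    show "(\<lambda>t. (1 - t) * f X + t * f Y) integrable_on {0..1}" using lin by blast
    fix t :: real assume t: "t \<in> {0..1}"
    show "\<phi> t \<le> (1 - t) * f X + t * f Y"
      unfolding \<phi>_def using convex_onD[OF cf, of t X Y] t XK YK by auto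
  qed
  then show "integral {0..1} (\<lambda>t. f ((1 - t) *\<^sub>R X + t *\<^sub>R Y)) \<le> (f X + f Y) / 2"
    using integral_unique[OF lin] by (simp add: \<phi>_def)
qed


lemma Basis2: "(Basis :: (real^2) set) = {axis 1 1, axis 2 1}"
  by (auto simp: Basis_vec_def UNIV_2)

lemma axis12: "axis 1 (1::real) \<noteq> (axis 2 1 :: real^2)"
  by (simp add: axis_eq_axis)

lemma prod_integral:
  fixes a b :: "real \<Rightarrow> real"
  assumes ca: "continuous_on {0<..<1} a" and cb: "continuous_on {0<..<1} b"
    and a0: "\<And>t. t \<in> {0<..<1} \<Longrightarrow> 0 \<le> a t" and b0: "\<And>t. t \<in> {0<..<1} \<Longrightarrow> 0 \<le> b t"
    and ia: "(a has_integral Ia) {0<..<1}" and ib: "(b has_integral Ib) {0<..<1}"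
  shows "((\<lambda>x::real^2. a (x$1) * b (x$2)) has_integral (Ia * Ib)) (box 0 1)"
proof -
  define A where "A t = indicator {0<..<1::real} t *\<^sub>R a t" for t
  define B where "B t = indicator {0<..<1::real} t *\<^sub>R b t" for t
  have Am[measurable]: "A \<in> borel_measurable borel"
    unfolding A_def by (rule borel_measurable_continuous_on_indicator) (use ca in auto)
  have Bm[measurable]: "B \<in> borel_measurable borel"
    unfolding B_def by (rule borel_measurable_continuous_on_indicator) (use cb in auto)
  have A0: "0 \<le> A t" for t using a0 by (auto simp: A_def indicator_def)
  have B0: "0 \<le> B t" for t using b0 by (auto simp: B_def indicator_def)
  have "A = (\<lambda>t. if t \<in> {0<..<1::real} then a t else 0)"
    by (auto simp: A_def indicator_def fun_eq_iff)
  then have AI: "(A has_integral Ia) UNIV"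
    using ia has_integral_restrict_UNIV[of "{0<..<1::real}" a Ia] by simp
  have "B = (\<lambda>t. if t \<in> {0<..<1::real} then b t else 0)"
    by (auto simp: B_def indicator_def fun_eq_iff)
  then have BI: "(B has_integral Ib) UNIV"
    using ib has_integral_restrict_UNIV[of "{0<..<1::real}" b Ib] by simp
  have Ia0: "0 \<le> Ia" using has_integral_nonneg[OF AI] A0 by auto
  have Ib0: "0 \<le> Ib" using has_integral_nonneg[OF BI] B0 by auto
  have NA: "integral\<^sup>N lborel A = ennreal Ia"
    by (rule nn_integral_has_integral_lborel[OF Am A0 AI])
  have NB: "integral\<^sup>N lborel B = ennreal Ib"
    by (rule nn_integral_has_integral_lborel[OF Bm B0 BI])
  define F :: "real^2 \<Rightarrow> real \<Rightarrow> ennreal" where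
    "F c t = (if c = axis 1 1 then ennreal (A t) else ennreal (B t))" for c t
  have "(\<integral>\<^sup>+x. (\<Prod>c\<in>Basis. F c (x \<bullet> c)) \<partial>lborel) = (\<Prod>c\<in>Basis. (\<integral>\<^sup>+x. F c x \<partial>lborel))"
    by (rule nn_integral_lborel_prod) (auto simp: F_def)
  also have "\<dots> = ennreal Ia * ennreal Ib"
    by (simp add: Basis2 axis12 axis12[symmetric] F_def NA NB)
  also have "\<dots> = ennreal (Ia * Ib)"
    using Ia0 Ib0 by (simp add: ennreal_mult)
  finally have N: "(\<integral>\<^sup>+x. ennreal (A ((x::real^2)$1) * B (x$2)) \<partial>lborel) = ennreal (Ia * Ib)"
    by (simp add: Basis2 axis12 axis12[symmetric] F_def cart_eq_inner_axis ennreal_mult A0 B0)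
  have H: "((\<lambda>x::real^2. A (x$1) * B (x$2)) has_integral (Ia * Ib)) UNIV"
    by (rule nn_integral_has_integral) (use N A0 B0 Ia0 Ib0 in auto)
  have eq: "(\<lambda>x::real^2. A (x$1) * B (x$2)) = (\<lambda>x. if x \<in> box 0 1 then a (x$1) * b (x$2) else 0)"
    by (auto simp: A_def B_def indicator_def mem_box_cart forall_2)
  show ?thesis using H unfolding eq has_integral_restrict_UNIV .
qed


lemma cont_vec_nth [continuous_intros]:
  "continuous_on S f \<Longrightarrow> continuous_on S (\<lambda>x. (f x :: real^'n) $ i)"
  using continuous_on_compose2[OF linear_continuous_on[OF bounded_linear_vec_nth[of i]], of S f UNIV]
  by auto

lemma deriv_vec_nth [derivative_intros]:
  "(f has_derivative f') F \<Longrightarrow> ((\<lambda>x. (f x :: real^'n) $ i) has_derivative (\<lambda>h. f' h $ i)) F"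
  using bounded_linear.has_derivative[OF bounded_linear_vec_nth] by blast

definition gmap :: "real^2 \<Rightarrow> real^2 \<Rightarrow> real^2 \<Rightarrow> real^2 \<Rightarrow> real^2" where
  "gmap P X Y x = (1 - x$1) *\<^sub>R P + x$1 *\<^sub>R ((1 - x$2) *\<^sub>R X + x$2 *\<^sub>R Y)"

definition Vset :: "real^2 \<Rightarrow> real^2 \<Rightarrow> real^2 \<Rightarrow> (real^2) set" where
  "Vset P X Y = {z. 0 < orient z X Y * orient P X Y \<and> 0 < orient P z Y * orient P X Y
                    \<and> 0 < orient P X z * orient P X Y}"

lemma bary_orient:
  assumes "u + v + w = 1"
  shows "orient (u *\<^sub>R P + v *\<^sub>R X + w *\<^sub>R Y) X Y = u * orient P X Y"
    "orient P (u *\<^sub>R P + v *\<^sub>R X + w *\<^sub>R Y) Y = v * orient P X Y"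
    "orient P X (u *\<^sub>R P + v *\<^sub>R X + w *\<^sub>R Y) = w * orient P X Y"
proof -
  have u: "u = 1 - v - w" using assms by simp
  show "orient (u *\<^sub>R P + v *\<^sub>R X + w *\<^sub>R Y) X Y = u * orient P X Y"
    "orient P (u *\<^sub>R P + v *\<^sub>R X + w *\<^sub>R Y) Y = v * orient P X Y"
    "orient P X (u *\<^sub>R P + v *\<^sub>R X + w *\<^sub>R Y) = w * orient P X Y"
    unfolding u orient_def by (simp_all add: algebra_simps)
qed

lemma orient_sum: "orient z X Y + orient P z Y + orient P X z = orient P X Y"
  by (simp add: orient_def algebra_simps)

lemma cramer:
  assumes D: "orient P X Y \<noteq> 0"
  shows "z = (orient z X Y / orient P X Y) *\<^sub>R P + (orient P z Y / orient P X Y) *\<^sub>R X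
           + (orient P X z / orient P X Y) *\<^sub>R Y"
proof -
  have e: "orient P X Y *\<^sub>R z = orient z X Y *\<^sub>R P + orient P z Y *\<^sub>R X + orient P X z *\<^sub>R Y"
    by (simp add: vec2_eq orient_def algebra_simps)
  have "z = (1 / orient P X Y) *\<^sub>R (orient P X Y *\<^sub>R z)" using D by simp
  also have "\<dots> = (orient z X Y / orient P X Y) *\<^sub>R P + (orient P z Y / orient P X Y) *\<^sub>R X
           + (orient P X z / orient P X Y) *\<^sub>R Y"
    unfolding e by (simp add: scaleR_add_right)
  finally show ?thesis .
qed

lemma gmap_eq: "gmap P X Y x = (1 - x$1) *\<^sub>R P + (x$1 * (1 - x$2)) *\<^sub>R X + (x$1 * x$2) *\<^sub>R Y"
  by (simp add: gmap_def algebra_simps)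

lemma gmap_orient:
  "orient (gmap P X Y x) X Y = (1 - x$1) * orient P X Y"
  "orient P (gmap P X Y x) Y = (x$1 * (1 - x$2)) * orient P X Y"
  "orient P X (gmap P X Y x) = (x$1 * x$2) * orient P X Y"
  unfolding gmap_eq by (rule bary_orient; simp add: algebra_simps)+

lemma gmap_image:
  assumes D: "orient P X Y \<noteq> 0"
  shows "gmap P X Y ` box 0 1 = Vset P X Y"
proof
  have DD: "0 < orient P X Y * orient P X Y" using D by (metis not_real_square_gt_zero)
  show "gmap P X Y ` box 0 1 \<subseteq> Vset P X Y"
  proof clarify
    fix x :: "real^2" assume "x \<in> box 0 1"
    then have x: "0 < x$1" "x$1 < 1" "0 < x$2" "x$2 < 1" by (auto simp: mem_box_cart)
    show "gmap P X Y x \<in> Vset P X Y"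
      unfolding Vset_def using x DD
      by (simp add: gmap_orient mult.assoc)
  qed
  show "Vset P X Y \<subseteq> gmap P X Y ` box 0 1"
  proof
    fix z assume z: "z \<in> Vset P X Y"
    define D' where "D' = orient P X Y"
    define u where "u = orient z X Y / D'"
    define v where "v = orient P z Y / D'"
    define w where "w = orient P X z / D'"
    have pos: "0 < u" "0 < v" "0 < w"
      using z unfolding Vset_def u_def v_def w_def D'_def
      by (auto simp: zero_less_divide_iff zero_less_mult_iff)
    have sum: "u + v + w = 1"
      unfolding u_def v_def w_def using D orient_sum[of z X Y P]
      by (simp add: D'_def add_divide_distrib[symmetric])
    define x :: "real^2" where "x = vector [v + w, w / (v + w)]"
    have x1: "x$1 = v + w" and x2: "x$2 = w / (v + w)" by (simp_all add: x_def)
    have "x \<in> box 0 1" using pos sum by (auto simp: mem_box_cart forall_2 x1 x2 field_simps)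
    moreover have "gmap P X Y x = z"
    proof -
      have "gmap P X Y x = u *\<^sub>R P + v *\<^sub>R X + w *\<^sub>R Y"
      proof -
        have c1: "1 - (v + w) = u" using sum by simp
        have c2: "(v + w) * (1 - w / (v + w)) = v" using pos by (simp add: field_simps)
        have c3: "(v + w) * (w / (v + w)) = w" using pos by (simp add: field_simps)
        show ?thesis unfolding gmap_eq x1 x2 c1 c2 c3 ..
      qed
      also have "\<dots> = z" using cramer[OF D, of z] by (simp add: u_def v_def w_def D'_def)
      finally show ?thesis .
    qed
    ultimately show "z \<in> gmap P X Y ` box 0 1" by blast
  qed
qed

lemma Vset_sub: assumes D: "orient P X Y \<noteq> 0" shows "Vset P X Y \<subseteq> convex hull {P, X, Y}"
proof
  fix z assume z: "z \<in> Vset P X Y"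
  define D' where "D' = orient P X Y"
  define u where "u = orient z X Y / D'"
  define v where "v = orient P z Y / D'"
  define w where "w = orient P X z / D'"
  have pos: "0 < u" "0 < v" "0 < w"
    using z unfolding Vset_def u_def v_def w_def D'_def
    by (auto simp: zero_less_divide_iff zero_less_mult_iff)
  have sum: "u + v + w = 1"
    unfolding u_def v_def w_def using D orient_sum[of z X Y P]
    by (simp add: D'_def add_divide_distrib[symmetric])
  have "z = u *\<^sub>R P + v *\<^sub>R X + w *\<^sub>R Y" using cramer[OF D, of z] by (simp add: u_def v_def w_def D'_def)
  then show "z \<in> convex hull {P, X, Y}" unfolding convex_hull_3 using pos sum
    by (intro CollectI exI[of _ u] exI[of _ v] exI[of _ w]) auto
qed

lemma hull_minus_Vset:
  assumes D: "orient P X Y \<noteq> 0"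
  shows "convex hull {P, X, Y} - Vset P X Y \<subseteq>
         {z. orient X Y z = 0} \<union> {z. orient P Y z = 0} \<union> {z. orient P X z = 0}"
proof
  fix z assume z: "z \<in> convex hull {P, X, Y} - Vset P X Y"
  obtain u v w where uvw: "0 \<le> u" "0 \<le> v" "0 \<le> w" "u + v + w = 1"
    and zz: "z = u *\<^sub>R P + v *\<^sub>R X + w *\<^sub>R Y"
    using z unfolding convex_hull_3 by blast
  have o: "orient z X Y = u * orient P X Y" "orient P z Y = v * orient P X Y"
      "orient P X z = w * orient P X Y"
    unfolding zz using bary_orient[OF uvw(4)] by auto
  have cyc: "orient X Y z = orient z X Y" "orient P Y z = - orient P z Y"
    by (simp_all add: orient_def algebra_simps)
  have DD: "0 < orient P X Y * orient P X Y" using D by (metis not_real_square_gt_zero)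
  have "\<not> (0 < u \<and> 0 < v \<and> 0 < w)"
  proof
    assume "0 < u \<and> 0 < v \<and> 0 < w"
    then have "z \<in> Vset P X Y" using DD by (auto simp: Vset_def o mult.assoc intro!: mult_pos_pos)
    then show False using z by blast
  qed
  then have "u = 0 \<or> v = 0 \<or> w = 0" using uvw by auto
  then show "z \<in> {z. orient X Y z = 0} \<union> {z. orient P Y z = 0} \<union> {z. orient P X z = 0}"
    using o cyc by auto
qed

lemma open_Vset: "open (Vset P X Y)"
  unfolding Vset_def Collect_conj_eq orient_def
  by (intro open_Int open_Collect_less continuous_intros)

lemma gmap_inj:
  assumes D: "orient P X Y \<noteq> 0"
  shows "inj_on (gmap P X Y) (box 0 1)"
proof
  fix x y :: "real^2" assume x: "x \<in> box 0 1" and y: "y \<in> box 0 1" and e: "gmap P X Y x = gmap P X Y y"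
  have a: "x$1 = y$1" using gmap_orient(1)[of P X Y x] gmap_orient(1)[of P X Y y] e D by simp
  have "x$1 * x$2 = y$1 * y$2" using gmap_orient(3)[of P X Y x] gmap_orient(3)[of P X Y y] e D by simp
  moreover have "0 < x$1" using x by (auto simp: mem_box_cart)
  ultimately have "x$2 = y$2" using a by simp
  with a show "x = y" by (simp add: vec2_eq)
qed


definition gder :: "real^2 \<Rightarrow> real^2 \<Rightarrow> real^2 \<Rightarrow> real^2 \<Rightarrow> real^2 \<Rightarrow> real^2" where
  "gder P X Y x h = (-(h$1)) *\<^sub>R P + h$1 *\<^sub>R ((1 - x$2) *\<^sub>R X + x$2 *\<^sub>R Y)
                    + x$1 *\<^sub>R ((-(h$2)) *\<^sub>R X + h$2 *\<^sub>R Y)"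

lemma gmap_deriv: "(gmap P X Y has_derivative gder P X Y x) (at x within S)"
  unfolding gmap_def[abs_def] gder_def[abs_def]
  by (auto intro!: derivative_eq_intros simp: fun_eq_iff algebra_simps)

lemma gder_det: "det (matrix (gder P X Y x)) = x$1 * orient P X Y"
  by (simp add: det_2 matrix_def gder_def axis_def orient_def algebra_simps)

lemma cov_real:
  fixes g :: "real^2 \<Rightarrow> real^2" and h :: "real^2 \<Rightarrow> real"
  assumes S: "S \<in> sets lebesgue" and der: "\<And>x. x \<in> S \<Longrightarrow> (g has_derivative g' x) (at x within S)"
    and inj: "inj_on g S"
    and ai: "(\<lambda>x. \<bar>det (matrix (g' x))\<bar> * h (g x)) absolutely_integrable_on S"
  shows "h absolutely_integrable_on (g ` S) \<and>
         integral (g ` S) h = integral S (\<lambda>x. \<bar>det (matrix (g' x))\<bar> * h (g x))"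
proof -
  define H :: "real^2 \<Rightarrow> real^1" where "H z = vec (h z)" for z
  let ?I = "integral S (\<lambda>x. \<bar>det (matrix (g' x))\<bar> * h (g x))"
  have 1: "(\<lambda>x. \<bar>det (matrix (g' x))\<bar> *\<^sub>R H (g x)) absolutely_integrable_on S"
    using ai by (simp add: absolutely_integrable_on_1_iff H_def)
  have 2: "integral S (\<lambda>x. \<bar>det (matrix (g' x))\<bar> *\<^sub>R H (g x)) = vec ?I"
    by (subst integral_on_1_eq) (simp add: H_def)
  have "H absolutely_integrable_on (g ` S) \<and> integral (g ` S) H = vec ?I"
    using has_absolute_integral_change_of_variables[OF S der inj, of H "vec ?I"] 1 2 by blast
  moreover have "integral (g ` S) H = vec (integral (g ` S) h)"
    by (subst integral_on_1_eq) (simp add: H_def)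
  ultimately show ?thesis
    by (simp add: absolutely_integrable_on_1_iff H_def vec_eq)
qed


lemma Icc_Ioo: "((f::real\<Rightarrow>real) has_integral I) {0..1::real} \<Longrightarrow> (f has_integral I) {0<..<1}"
proof -
  assume h: "(f has_integral I) {0..1::real}"
  have n1: "negligible {x \<in> {0..1::real} - {0<..<1}. f x \<noteq> 0}"
    by (rule negligible_subset[of "{0,1}"]) auto
  have n2: "negligible {x \<in> {0<..<1::real} - {0..1}. f x \<noteq> 0}"
    by (rule negligible_subset[of "{}"]) auto
  show ?thesis using has_integral_spike_set_eq[OF n1 n2, of I] h by simp
qed

lemma poly_int1: "((\<lambda>t::real. t) has_integral 1/2) {0<..<1}"
proof -
  have "((\<lambda>t::real. t) has_integral ((\<lambda>t. t*t/2) 1 - (\<lambda>t. t*t/2) 0)) {0..1}"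
    apply (rule fundamental_theorem_of_calculus)
     apply simp
    apply (rule derivative_eq_intros refl)+
    apply (simp add: algebra_simps)
    done
  then show ?thesis using Icc_Ioo by simp
qed

lemma poly_int2: "((\<lambda>t::real. t*t) has_integral 1/3) {0<..<1}"
proof -
  have "((\<lambda>t::real. t*t) has_integral ((\<lambda>t. t*t*t/3) 1 - (\<lambda>t. t*t*t/3) 0)) {0..1}"
    apply (rule fundamental_theorem_of_calculus)
     apply simp
    apply (rule derivative_eq_intros refl)+
    apply (simp add: algebra_simps)
    done
  then show ?thesis using Icc_Ioo by simp
qed

lemma poly_int3: "((\<lambda>t::real. t*(1-t)) has_integral 1/6) {0<..<1}"
proof -
  have "((\<lambda>t::real. t*(1-t)) has_integral ((\<lambda>t. t*t/2 - t*t*t/3) 1 - (\<lambda>t. t*t/2 - t*t*t/3) 0)) {0..1}"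
    apply (rule fundamental_theorem_of_calculus)
     apply simp
    apply (rule derivative_eq_intros refl)+
    apply (simp add: algebra_simps)
    done
  then show ?thesis using Icc_Ioo by simp
qed

lemma const_int: "((\<lambda>t::real. c::real) has_integral c) {0<..<1}"
  using Icc_Ioo[of "\<lambda>t. c" c] has_integral_const_real[of c 0 1] by simp

lemma cone:
  fixes f :: "real^2 \<Rightarrow> real"
  assumes D: "orient P X Y \<noteq> 0" and cf: "convex_on (convex hull {P, X, Y}) f"
  shows "f absolutely_integrable_on convex hull {P, X, Y}"
    and "measure lebesgue (convex hull {P, X, Y}) = \<bar>orient P X Y\<bar> / 2"
    and "integral (convex hull {P, X, Y}) f \<le> \<bar>orient P X Y\<bar> * (f P / 6 + avg_seg f X Y / 3)"
proof -
  define K where "K = convex hull {P, X, Y}"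
  define DD where "DD = orient P X Y"
  define g where "g = gmap P X Y"
  define S where "S = box 0 (1::real^2)"
  define V where "V = Vset P X Y"
  obtain M where M: "\<And>z. z \<in> K \<Longrightarrow> \<bar>f z\<bar> \<le> M" using hull_bound[OF cf] unfolding K_def by blast
  have PK: "P \<in> K" and XK: "X \<in> K" and YK: "Y \<in> K" by (auto simp: K_def hull_inc)
  have cfK: "convex_on K f" using cf K_def by simp
  have VK: "V \<subseteq> K" unfolding V_def K_def by (rule Vset_sub[OF D])
  have img: "g ` S = V" unfolding g_def S_def V_def by (rule gmap_image[OF D])
  have fcont: "continuous_on V f"
  proof -
    have "convex_on (interior K) f"
      by (rule convex_on_subset[OF cfK interior_subset]) (simp add: K_def convex_interior)
    then have "continuous_on (interior K) f"
      by (rule convex_on_continuous[OF open_interior])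
    moreover have "V \<subseteq> interior K" using VK open_Vset interior_maximal V_def by blast
    ultimately show ?thesis using continuous_on_subset by blast
  qed
  have gcont: "continuous_on S g" unfolding g_def gmap_def[abs_def] by (intro continuous_intros)
  have gS: "\<And>x. x \<in> S \<Longrightarrow> g x \<in> V" using img by blast
  have S1: "0 < x$1 \<and> x$1 < 1 \<and> 0 < x$2 \<and> x$2 < 1" if "x \<in> S" for x
    using that by (auto simp: S_def mem_box_cart)
  have detx: "\<bar>det (matrix (gder P X Y x))\<bar> = \<bar>x$1 * DD\<bar>" for x by (simp add: gder_det DD_def)
  have Sleb: "S \<in> sets lebesgue" unfolding S_def using lmeasurable_box fmeasurableD by blast
  have Slm: "S \<in> lmeasurable" unfolding S_def by simp
  have der: "\<And>x. x \<in> S \<Longrightarrow> (g has_derivative gder P X Y x) (at x within S)"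
    unfolding g_def by (rule gmap_deriv)
  have inj: "inj_on g S" unfolding g_def S_def by (rule gmap_inj[OF D])
  have ai1: "(\<lambda>x. \<bar>det (matrix (gder P X Y x))\<bar> * f (g x)) absolutely_integrable_on S"
    unfolding detx
  proof (rule absint_bdd_cont[where M="\<bar>DD\<bar> * M"])
    show "S \<in> lmeasurable" by (rule Slm)
    show "continuous_on S (\<lambda>x. \<bar>x$1 * DD\<bar> * f (g x))"
      by (intro continuous_intros continuous_on_compose2[OF fcont gcont]) (use gS in auto)
    fix x assume x: "x \<in> S"
    have "\<bar>f (g x)\<bar> \<le> M" using M gS[OF x] VK by blast
    moreover have "\<bar>x$1 * DD\<bar> \<le> \<bar>DD\<bar>" using S1[OF x] by (simp add: abs_mult mult_left_le_one_le)
    ultimately show "\<bar>\<bar>x$1 * DD\<bar> * f (g x)\<bar> \<le> \<bar>DD\<bar> * M"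
      by (simp add: abs_mult mult_mono)
  qed
  have ai2: "(\<lambda>x. \<bar>det (matrix (gder P X Y x))\<bar> * (\<lambda>_. 1::real) (g x)) absolutely_integrable_on S"
    unfolding detx
  proof (rule absint_bdd_cont[where M="\<bar>DD\<bar>"])
    show "S \<in> lmeasurable" by (rule Slm)
    show "continuous_on S (\<lambda>x. \<bar>x$1 * DD\<bar> * 1)" by (intro continuous_intros)
    fix x assume x: "x \<in> S"
    show "\<bar>\<bar>x$1 * DD\<bar> * 1\<bar> \<le> \<bar>DD\<bar>" using S1[OF x] by (simp add: abs_mult mult_left_le_one_le)
  qed
  note cv1 = cov_real[OF Sleb der inj ai1, unfolded img]
  note cv2 = cov_real[OF Sleb der inj ai2, unfolded img]
  have o0: "orient A B B = 0" "orient A A B = 0" "orient A B A = 0" for A B :: "real^2"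
    by (simp_all add: orient_def)
  have neq: "X \<noteq> Y" "P \<noteq> Y" "P \<noteq> X" using D o0 by metis+
  have N: "negligible (K - V)"
  proof (rule negligible_subset)
    show "K - V \<subseteq> {z. orient X Y z = 0} \<union> {z. orient P Y z = 0} \<union> {z. orient P X z = 0}"
      unfolding K_def V_def by (rule hull_minus_Vset[OF D])
    show "negligible ({z. orient X Y z = 0} \<union> {z. orient P Y z = 0} \<union> {z. orient P X z = 0})"
      using line_negl[OF neq(1)] line_negl[OF neq(2)] line_negl[OF neq(3)] by auto
  qed
  have N1: "negligible {x \<in> K - V. h x \<noteq> 0}" for h :: "real^2 \<Rightarrow> real"
    by (rule negligible_subset[OF N]) auto
  have N2: "negligible {x \<in> V - K. h x \<noteq> 0}" for h :: "real^2 \<Rightarrow> real"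
    by (rule negligible_subset[of "{}"]) (use VK in auto)
  have "f absolutely_integrable_on K"
    using cv1 absolutely_integrable_spike_set_eq[OF N1 N2] by (simp only:)
  then show fK: "f absolutely_integrable_on convex hull {P, X, Y}" unfolding K_def .
  have "integral K f = integral V f" by (rule integral_spike_set[OF N1 N2])
  also have "\<dots> = integral S (\<lambda>x. \<bar>det (matrix (gder P X Y x))\<bar> * f (g x))" using cv1 by (simp only:)
  finally have intK: "integral K f = integral S (\<lambda>x. \<bar>x$1 * DD\<bar> * f (g x))"
    by (simp only: detx)
  have Klm: "K \<in> lmeasurable" unfolding K_def
    by (rule measurable_convex) (auto intro: finite_imp_bounded_convex_hull)
  have "((\<lambda>x::real^2. (\<bar>DD\<bar> * x$1) * 1) has_integral ((\<bar>DD\<bar> * (1/2)) * 1)) S"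
    unfolding S_def
    by (rule prod_integral[of "\<lambda>t. \<bar>DD\<bar> * t" "\<lambda>t. 1"])
       (auto intro!: continuous_intros const_int has_integral_mult_right[OF poly_int1, of "\<bar>DD\<bar>", simplified])
  then have I1: "integral S (\<lambda>x. (\<bar>DD\<bar> * x$1) * 1) = \<bar>DD\<bar> * (1/2) * 1"
    by (rule integral_unique)
  have "integral S (\<lambda>x. \<bar>x$1 * DD\<bar> * 1) = integral S (\<lambda>x. (\<bar>DD\<bar> * x$1) * 1)"
  proof (rule integral_cong)
    fix x assume "x \<in> S"
    then have "\<bar>x$1\<bar> = x$1" using S1 by force
    then show "\<bar>x$1 * DD\<bar> * 1 = (\<bar>DD\<bar> * x$1) * 1" by (simp add: abs_mult)
  qed
  with I1 have "integral S (\<lambda>x. \<bar>x$1 * DD\<bar> * 1) = \<bar>DD\<bar> / 2" by simp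
  moreover have "integral V (\<lambda>_. 1::real) = integral S (\<lambda>x. \<bar>x$1 * DD\<bar> * 1)"
    using cv2 unfolding detx by simp
  moreover have "integral K (\<lambda>_. 1::real) = integral V (\<lambda>_. 1)"
    by (rule integral_spike_set[OF N1 N2])
  moreover have "measure lebesgue K = integral K (\<lambda>_. 1::real)"
    by (rule lmeasure_integral[OF Klm])
  ultimately have "measure lebesgue K = \<bar>DD\<bar> / 2" by simp
  then show "measure lebesgue (convex hull {P, X, Y}) = \<bar>orient P X Y\<bar> / 2"
    unfolding K_def DD_def .
  define \<phi> where "\<phi> t = f ((1 - t) *\<^sub>R X + t *\<^sub>R Y)" for t
  note sf = seg_facts[OF cfK XK YK M]
  have phic: "continuous_on {0<..<1} \<phi>" using sf(1) by (simp add: \<phi>_def[abs_def])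
  have phib: "\<And>t. t \<in> {0..1} \<Longrightarrow> \<bar>\<phi> t\<bar> \<le> M" using sf(4) by (simp add: \<phi>_def)
  define I\<phi> where "I\<phi> = integral {0..1} \<phi>"
  have avg: "avg_seg f X Y = I\<phi>" by (simp add: avg_seg_def I\<phi>_def \<phi>_def[abs_def])
  have "\<phi> integrable_on {0..1}"
    using sf(2) by (simp add: \<phi>_def[abs_def] absolutely_integrable_on_def)
  then have phiI: "(\<phi> has_integral I\<phi>) {0<..<1}"
    unfolding I\<phi>_def by (intro Icc_Ioo integrable_integral)
  define R where "R x = \<bar>DD\<bar> * f P * (x$1 * (1 - x$1) * 1) + \<bar>DD\<bar> * (x$1 * x$1 * (\<phi> (x$2) + M))
      - \<bar>DD\<bar> * M * (x$1 * x$1 * 1)" for x :: "real^2"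
  have h1: "((\<lambda>x::real^2. x$1 * (1 - x$1) * 1) has_integral (1/6 * 1)) S"
    unfolding S_def
    by (rule prod_integral[of "\<lambda>t. t * (1 - t)" "\<lambda>t. 1" "1/6" 1])
       (simp_all add: poly_int3 const_int continuous_on_mult continuous_on_diff continuous_on_id continuous_on_const)
  have h2: "((\<lambda>x::real^2. x$1 * x$1 * 1) has_integral (1/3 * 1)) S"
    unfolding S_def
    by (rule prod_integral[of "\<lambda>t. t * t" "\<lambda>t. 1" "1/3" 1])
       (simp_all add: poly_int2 const_int continuous_on_mult continuous_on_id continuous_on_const)
  have h3: "((\<lambda>x::real^2. x$1 * x$1 * (\<phi> (x$2) + M)) has_integral (1/3 * (I\<phi> + M))) S"
    unfolding S_def
  proof (rule prod_integral[of "\<lambda>t. t * t" "\<lambda>t. \<phi> t + M" "1/3" "I\<phi> + M"])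
    show "continuous_on {0<..<1} (\<lambda>t. \<phi> t + M)" by (intro continuous_on_add phic continuous_on_const)
    show "0 \<le> \<phi> t + M" if "t \<in> {0<..<1}" for t using phib[of t] that by auto
    show "((\<lambda>t. \<phi> t + M) has_integral I\<phi> + M) {0<..<1}"
      by (intro has_integral_add phiI const_int)
  qed (simp_all add: poly_int2 continuous_on_mult continuous_on_id)
  have HR: "(R has_integral (\<bar>DD\<bar> * f P * (1/6 * 1) + \<bar>DD\<bar> * (1/3 * (I\<phi> + M)) - \<bar>DD\<bar> * M * (1/3 * 1))) S"
    unfolding R_def[abs_def]
    by (rule has_integral_diff[OF has_integral_add[OF has_integral_mult_right[OF h1] has_integral_mult_right[OF h3]]
          has_integral_mult_right[OF h2]])
  have le: "integral S (\<lambda>x. \<bar>x$1 * DD\<bar> * f (g x)) \<le> integral S R"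
  proof (rule integral_le)
    show "(\<lambda>x. \<bar>x$1 * DD\<bar> * f (g x)) integrable_on S"
      using ai1 by (simp add: detx absolutely_integrable_on_def)
    show "R integrable_on S" using HR by blast
    fix x assume x: "x \<in> S"
    define Q where "Q = (1 - x$2) *\<^sub>R X + x$2 *\<^sub>R Y"
    have QK: "Q \<in> K" unfolding Q_def
      using convexD[OF _ XK YK, of "1 - x$2" "x$2"] S1[OF x] by (auto simp: K_def)
    have gx: "g x = (1 - x$1) *\<^sub>R P + x$1 *\<^sub>R Q" by (simp add: g_def gmap_def Q_def)
    have "f (g x) \<le> (1 - x$1) * f P + x$1 * f Q"
      unfolding gx by (rule convex_onD[OF cfK]) (use S1[OF x] PK QK in auto)
    then have "(x$1 * \<bar>DD\<bar>) * f (g x) \<le> (x$1 * \<bar>DD\<bar>) * ((1 - x$1) * f P + x$1 * f Q)"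
      by (rule mult_left_mono) (use S1[OF x] in auto)
    moreover have "\<bar>x$1 * DD\<bar> = x$1 * \<bar>DD\<bar>" using S1[OF x] by (simp add: abs_mult)
    moreover have "R x = (x$1 * \<bar>DD\<bar>) * ((1 - x$1) * f P + x$1 * f Q)"
      by (simp add: R_def Q_def \<phi>_def algebra_simps)
    ultimately show "\<bar>x$1 * DD\<bar> * f (g x) \<le> R x" by simp
  qed
  show "integral (convex hull {P, X, Y}) f \<le> \<bar>orient P X Y\<bar> * (f P / 6 + avg_seg f X Y / 3)"
  proof -
    have "integral S R = \<bar>DD\<bar> * (f P / 6 + I\<phi> / 3)"
    proof -
      have "integral S R = \<bar>DD\<bar> * f P * (1/6 * 1) + \<bar>DD\<bar> * (1/3 * (I\<phi> + M)) - \<bar>DD\<bar> * M * (1/3 * 1)"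
        by (rule integral_unique[OF HR])
      also have "\<dots> = \<bar>DD\<bar> * (f P / 6 + I\<phi> / 3)" by (simp add: algebra_simps)
      finally show ?thesis .
    qed
    then have "integral K f \<le> \<bar>DD\<bar> * (f P / 6 + I\<phi> / 3)" using le intK by linarith
    then show ?thesis unfolding K_def DD_def avg .

  qed
qed


lemma split_tri:
  fixes f :: "real^2 \<Rightarrow> real"
  assumes D: "orient A B C \<noteq> 0" and cf: "convex_on (convex hull {A, B, C}) f"
  shows "f absolutely_integrable_on convex hull {A, B, C}"
    and "integral (convex hull {A, B, C}) f \<le> \<bar>orient A B C\<bar> / 2 *
           (f (midpoint A C) / 3 + (avg_seg f A B + avg_seg f B C) / 3)"
proof -
  define Om where "Om = midpoint A C"
  define H where "H = convex hull {A, B, C}"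
  define T1 where "T1 = convex hull {Om, A, B}"
  define T2 where "T2 = convex hull {Om, B, C}"
  have O1: "Om$1 = (A$1 + C$1) / 2" and O2: "Om$2 = (A$2 + C$2) / 2"
    by (simp_all add: Om_def midpoint_def)
  have oAB: "orient Om A B = orient A B C / 2" and oBC: "orient Om B C = orient A B C / 2"
    and oBA: "orient Om B A = - (orient A B C / 2)"
    by (simp_all add: orient_def O1 O2 field_simps)
  have DA: "orient Om A B \<noteq> 0" "orient Om B C \<noteq> 0" using D oAB oBC by auto
  have OH: "Om \<in> H"
  proof -
    have "Om = (1/2) *\<^sub>R A + 0 *\<^sub>R B + (1/2) *\<^sub>R C" by (simp add: Om_def midpoint_def algebra_simps)
    then show ?thesis unfolding H_def convex_hull_3
      by (intro CollectI exI[of _ "1/2"] exI[of _ 0]) auto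
  qed
  have T1H: "T1 \<subseteq> H" unfolding T1_def
    by (rule hull_minimal) (use OH in \<open>auto simp: H_def hull_inc convex_convex_hull\<close>)
  have T2H: "T2 \<subseteq> H" unfolding T2_def
    by (rule hull_minimal) (use OH in \<open>auto simp: H_def hull_inc convex_convex_hull\<close>)
  have HT: "H \<subseteq> T1 \<union> T2"
  proof
    fix z assume "z \<in> H"
    then obtain a b c where abc: "0 \<le> a" "0 \<le> b" "0 \<le> c" "a + b + c = 1"
      and z: "z = a *\<^sub>R A + b *\<^sub>R B + c *\<^sub>R C"
      unfolding H_def convex_hull_3 by blast
    show "z \<in> T1 \<union> T2"
    proof (cases "c \<le> a")
      case True
      have "z = (2*c) *\<^sub>R Om + (a - c) *\<^sub>R A + b *\<^sub>R B"
        by (simp add: z Om_def midpoint_def algebra_simps)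
      moreover have "0 \<le> 2*c" "0 \<le> a - c" "2*c + (a - c) + b = 1" using abc True by auto
      ultimately have "z \<in> T1" unfolding T1_def convex_hull_3 using abc(2) by blast
      then show ?thesis by blast
    next
      case False
      have "z = (2*a) *\<^sub>R Om + b *\<^sub>R B + (c - a) *\<^sub>R C"
        by (simp add: z Om_def midpoint_def algebra_simps)
      moreover have "0 \<le> 2*a" "0 \<le> c - a" "2*a + b + (c - a) = 1" using abc False by auto
      ultimately have "z \<in> T2" unfolding T2_def convex_hull_3 using abc(2) by blast
      then show ?thesis by blast
    qed
  qed
  have HU: "H = T1 \<union> T2" using HT T1H T2H by blast
  have o0: "orient X Y Y = 0" "orient X X Y = 0" "orient X Y X = 0" for X Y :: "real^2"
    by (simp_all add: orient_def)
  have OB: "Om \<noteq> B" using DA(1) o0 by metis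
  have neg: "negligible (T1 \<inter> T2)"
  proof (rule negligible_subset[OF line_negl[OF OB]])
    show "T1 \<inter> T2 \<subseteq> {z. orient Om B z = 0}"
    proof
      fix z assume z: "z \<in> T1 \<inter> T2"
      have "z \<in> convex hull {Om, B, A}" using z unfolding T1_def by (simp add: insert_commute)
      then obtain w1 where w1: "0 \<le> w1" "orient Om B z = w1 * orient Om B A" using orient_hull by blast
      obtain w2 where w2: "0 \<le> w2" "orient Om B z = w2 * orient Om B C"
        using orient_hull[of z Om B C] z unfolding T2_def by blast
      have "w1 * (- (orient A B C / 2)) = w2 * (orient A B C / 2)" using w1 w2 oBA oBC by simp
      then have "(w1 + w2) * orient A B C = 0" by (simp add: algebra_simps)
      then have "w1 + w2 = 0" using D by simp
      then have "w1 = 0" using w1 w2 by simp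
      then show "z \<in> {z. orient Om B z = 0}" using w1 by simp
    qed
  qed
  have c1: "convex_on (convex hull {Om, A, B}) f"
    by (rule convex_on_subset[OF cf]) (use T1H in \<open>auto simp: T1_def H_def\<close>)
  have c2: "convex_on (convex hull {Om, B, C}) f"
    by (rule convex_on_subset[OF cf]) (use T2H in \<open>auto simp: T2_def H_def\<close>)
  note k1 = cone[OF DA(1) c1] and k2 = cone[OF DA(2) c2]
  have i1: "f integrable_on T1" using k1(1) unfolding T1_def by (simp add: absolutely_integrable_on_def)
  have i2: "f integrable_on T2" using k2(1) unfolding T2_def by (simp add: absolutely_integrable_on_def)
  have "f absolutely_integrable_on (T1 \<union> T2)"
    using absolutely_integrable_Un k1(1) k2(1) unfolding T1_def T2_def by blast
  then show "f absolutely_integrable_on convex hull {A, B, C}" using HU H_def by simp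
  have "integral H f = integral T1 f + integral T2 f" unfolding HU by (rule integral_Un[OF i1 i2 neg])
  also have "\<dots> \<le> \<bar>orient Om A B\<bar> * (f Om / 6 + avg_seg f A B / 3) + \<bar>orient Om B C\<bar> * (f Om / 6 + avg_seg f B C / 3)"
    using k1(3) k2(3) unfolding T1_def T2_def by (rule add_mono)
  also have "\<dots> = \<bar>orient A B C\<bar> / 2 * (f Om / 3 + (avg_seg f A B + avg_seg f B C) / 3)"
    by (simp add: oAB oBC algebra_simps)
  finally show "integral (convex hull {A, B, C}) f \<le> \<bar>orient A B C\<bar> / 2 *
           (f (midpoint A C) / 3 + (avg_seg f A B + avg_seg f B C) / 3)"
    unfolding H_def Om_def .
qed


theorem theorem3p1:
  fixes A B C D :: "real^2" and f :: "real^2 \<Rightarrow> real"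
  assumes opposite: "orient A C B * orient A C D < 0"
    and equal_area: "measure lebesgue (convex hull {A, B, C}) = measure lebesgue (convex hull {A, C, D})"
    and conv1: "convex_on (convex hull {A, B, C}) f"
    and conv2: "convex_on (convex hull {A, C, D}) f"
  shows "(avg_area f (convex hull {A, B, C} \<union> convex hull {A, C, D})
           \<le> 1/3 * ((f B + f D) / 2 + 2 * avg_seg f A C)) \<and>
          (1/3 * ((f B + f D) / 2 + 2 * avg_seg f A C) \<le> 1/3 * ((f B + f D) / 2 + f A + f C)) \<and>
          (avg_area f (convex hull {A, B, C} \<union> convex hull {A, C, D})
           \<le> f (midpoint A C) / 3
              + 2/3 * ((avg_seg f A B + avg_seg f B C + avg_seg f C D + avg_seg f D A) / 4)) \<and>
          (f (midpoint A C) / 3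
              + 2/3 * ((avg_seg f A B + avg_seg f B C + avg_seg f C D + avg_seg f D A) / 4)
           \<le> f (midpoint A C) / 3 + 2/3 * ((f A + f B + f C + f D) / 4))"
proof -
  define H1 where "H1 = convex hull {A, B, C}"
  define H2 where "H2 = convex hull {A, C, D}"
  define Om where "Om = midpoint A C"
  have D1: "orient A C B \<noteq> 0" and D2: "orient A C D \<noteq> 0" using opposite by auto
  have cyc1: "orient B A C = orient A C B" and cyc1': "orient A B C = - orient A C B"
    and cyc2: "orient D A C = orient A C D" "orient C D A = orient A C D"
    by (simp_all add: orient_def algebra_simps)
  have h1: "convex hull {B, A, C} = H1" "convex hull {A, B, C} = H1" by (simp_all add: H1_def insert_commute)
  have h2: "convex hull {D, A, C} = H2" "convex hull {C, D, A} = H2" by (simp_all add: H2_def insert_commute)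
  have cf1: "convex_on H1 f" using conv1 H1_def by simp
  have cf2: "convex_on H2 f" using conv2 H2_def by simp
  note kB = cone[of B A C f, unfolded h1 cyc1, OF D1 cf1]
  note kD = cone[of D A C f, unfolded h2 cyc2, OF D2 cf2]
  have D1': "orient A B C \<noteq> 0" using D1 cyc1' by simp
  note sB = split_tri[OF D1' conv1, unfolded h1 cyc1' abs_minus_cancel]
  note sD = split_tri[of C D A f, unfolded h2 cyc2 midpoint_sym[of C A], OF D2 cf2]
  define T where "T = \<bar>orient A C B\<bar> / 2"
  have T2: "\<bar>orient A C D\<bar> / 2 = T" using kB(2) kD(2) equal_area by (simp add: T_def H1_def H2_def)
  have Tpos: "0 < T" using D1 by (simp add: T_def)
  have o0: "orient X Y Y = 0" "orient X X Y = 0" "orient X Y X = 0" for X Y :: "real^2"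
    by (simp_all add: orient_def)
  have AC: "A \<noteq> C" using D1 o0 by metis
  have neg: "negligible (H1 \<inter> H2)"
  proof (rule negligible_subset[OF line_negl[OF AC]])
    show "H1 \<inter> H2 \<subseteq> {z. orient A C z = 0}"
    proof
      fix z assume z: "z \<in> H1 \<inter> H2"
      have "z \<in> convex hull {A, C, B}" using z unfolding H1_def by (simp add: insert_commute)
      then obtain w1 where w1: "0 \<le> w1" "orient A C z = w1 * orient A C B" using orient_hull by blast
      obtain w2 where w2: "0 \<le> w2" "orient A C z = w2 * orient A C D"
        using orient_hull[of z A C D] z unfolding H2_def by blast
      have "(w1 * orient A C B) * (w2 * orient A C D) = (orient A C z)^2" using w1 w2 by (simp add: power2_eq_square)
      then have "w1 * w2 * (orient A C B * orient A C D) \<ge> 0" by (simp add: algebra_simps)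
      then have "\<not> (0 < w1 * w2)" using opposite by (metis mult_pos_neg not_le)
      then have "w1 * w2 \<le> 0" by simp
      then have "w1 = 0 \<or> w2 = 0" using w1 w2 by (simp add: mult_le_0_iff) (meson le_less)
      then show "z \<in> {z. orient A C z = 0}" using w1 w2 by auto
    qed
  qed
  have i1: "f integrable_on H1" using kB(1) by (simp add: absolutely_integrable_on_def)
  have i2: "f integrable_on H2" using kD(1) by (simp add: absolutely_integrable_on_def)
  have intU: "integral (H1 \<union> H2) f = integral H1 f + integral H2 f" by (rule integral_Un[OF i1 i2 neg])
  have lm1: "H1 \<in> lmeasurable" unfolding H1_def
    by (rule measurable_convex) (auto intro: finite_imp_bounded_convex_hull)
  have lm2: "H2 \<in> lmeasurable" unfolding H2_def
    by (rule measurable_convex) (auto intro: finite_imp_bounded_convex_hull)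
  have "measure lebesgue (H1 \<union> H2) = integral (H1 \<union> H2) (\<lambda>_. 1::real)"
    by (rule lmeasure_integral) (use lm1 lm2 in auto)
  also have "\<dots> = integral H1 (\<lambda>_. 1::real) + integral H2 (\<lambda>_. 1)"
    by (rule integral_Un[OF integrable_on_const[OF lm1] integrable_on_const[OF lm2] neg])
  also have "\<dots> = 2 * T"
    using lmeasure_integral[OF lm1] lmeasure_integral[OF lm2] kB(2) kD(2) T2 by (simp add: T_def)
  finally have mU: "measure lebesgue (H1 \<union> H2) = 2 * T" .
  have avgU: "avg_area f (H1 \<union> H2) = (integral H1 f + integral H2 f) / (2 * T)"
    by (simp add: avg_area_def intU mU)
  obtain M1 where M1: "\<And>z. z \<in> H1 \<Longrightarrow> \<bar>f z\<bar> \<le> M1" using hull_bound[OF conv1] unfolding H1_def by blast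
  obtain M2 where M2: "\<And>z. z \<in> H2 \<Longrightarrow> \<bar>f z\<bar> \<le> M2" using hull_bound[OF conv2] unfolding H2_def by blast
  have inH1: "A \<in> H1" "B \<in> H1" "C \<in> H1" by (auto simp: H1_def hull_inc)
  have inH2: "A \<in> H2" "C \<in> H2" "D \<in> H2" by (auto simp: H2_def hull_inc)
  have segAC: "avg_seg f A C \<le> (f A + f C) / 2"
    using seg_facts(3)[OF cf1 inH1(1) inH1(3) M1] by (simp add: avg_seg_def)
  have segAB: "avg_seg f A B \<le> (f A + f B) / 2"
    using seg_facts(3)[OF cf1 inH1(1) inH1(2) M1] by (simp add: avg_seg_def)
  have segBC: "avg_seg f B C \<le> (f B + f C) / 2"
    using seg_facts(3)[OF cf1 inH1(2) inH1(3) M1] by (simp add: avg_seg_def)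
  have segCD: "avg_seg f C D \<le> (f C + f D) / 2"
    using seg_facts(3)[OF cf2 inH2(2) inH2(3) M2] by (simp add: avg_seg_def)
  have segDA: "avg_seg f D A \<le> (f D + f A) / 2"
    using seg_facts(3)[OF cf2 inH2(3) inH2(1) M2] by (simp add: avg_seg_def)
  have I1a: "integral H1 f \<le> 2 * T * (f B / 6 + avg_seg f A C / 3)" using kB(3) by (simp add: T_def)
  have T2': "\<bar>orient A C D\<bar> = 2 * T" using T2 by simp
  have I2a: "integral H2 f \<le> 2 * T * (f D / 6 + avg_seg f A C / 3)" using kD(3) unfolding T2' .
  have ineq1: "avg_area f (H1 \<union> H2) \<le> 1/3 * ((f B + f D) / 2 + 2 * avg_seg f A C)"
  proof -
    have "integral H1 f + integral H2 f \<le> (2 * T) * (1/3 * ((f B + f D) / 2 + 2 * avg_seg f A C))"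
    proof -
      have e: "2 * T * (f B / 6 + avg_seg f A C / 3) + 2 * T * (f D / 6 + avg_seg f A C / 3)
          = (2 * T) * (1/3 * ((f B + f D) / 2 + 2 * avg_seg f A C))" by (simp add: field_simps)
      show ?thesis using I1a I2a e by linarith
    qed
    then show ?thesis unfolding avgU using Tpos by (simp add: divide_le_eq mult.commute)
  qed
  have I1b: "integral H1 f \<le> T * (f Om / 3 + (avg_seg f A B + avg_seg f B C) / 3)"
    using sB(2) by (simp add: T_def Om_def)
  have I2b: "integral H2 f \<le> T * (f Om / 3 + (avg_seg f C D + avg_seg f D A) / 3)"
    using sD(2) T2 by (simp add: Om_def)
  have ineq3: "avg_area f (H1 \<union> H2) \<le> f Om / 3
              + 2/3 * ((avg_seg f A B + avg_seg f B C + avg_seg f C D + avg_seg f D A) / 4)"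
  proof -
    have "integral H1 f + integral H2 f \<le> (2 * T) * (f Om / 3
              + 2/3 * ((avg_seg f A B + avg_seg f B C + avg_seg f C D + avg_seg f D A) / 4))"
    proof -
      have e: "T * (f Om / 3 + (avg_seg f A B + avg_seg f B C) / 3) + T * (f Om / 3 + (avg_seg f C D + avg_seg f D A) / 3)
          = (2 * T) * (f Om / 3
              + 2/3 * ((avg_seg f A B + avg_seg f B C + avg_seg f C D + avg_seg f D A) / 4))"
        by (simp add: field_simps)
      show ?thesis using I1b I2b e by linarith
    qed
    then show ?thesis unfolding avgU using Tpos by (simp add: divide_le_eq mult.commute)
  qed
  have g2: "1/3 * ((f B + f D) / 2 + 2 * avg_seg f A C) \<le> 1/3 * ((f B + f D) / 2 + f A + f C)"
    using segAC by (simp add: field_simps)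
  have g4: "f Om / 3 + 2/3 * ((avg_seg f A B + avg_seg f B C + avg_seg f C D + avg_seg f D A) / 4)
           \<le> f Om / 3 + 2/3 * ((f A + f B + f C + f D) / 4)"
    using segAB segBC segCD segDA by (simp add: field_simps)
  show ?thesis
    using ineq1 ineq3 g2 g4
    unfolding H1_def[symmetric] H2_def[symmetric] Om_def[symmetric]
    by blast
qed

end
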